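(* Let $\alpha>-1$ and let $\Phi:[0,\tfrac14]\to\mathbb{R}$ be a bounded measurable function, continuous at $\tfrac14$, with $\Phi(\tfrac14)\neq 0$. For $\sigma_\varepsilon^2>0$ define on $[-\pi,\pi]^2$ $$f(\lambda_1,\lambda_2)=\frac{\sigma_\varepsilon^2}{4\pi^2}\int_0^{1/4}\frac{\Phi(x)\,(\tfrac14-x)^{\alpha}}{\bigl(1-2x(\cos\lambda_1+\cos\lambda_2)\bigr)^2}\,dx .$$ Then: (i) if $\alpha>1$, $f$ is finite and continuous at every point of $[-\pi,\pi]^2$; (ii) if $-1<\alpha\le 1$, $f$ is continuous at every $(\lambda_1,\lambda_2)\neq(0,0)$ in $[-\pi,\pi]^2$ and $f(\lambda_1,\lambda_2)\to+\infty$ as $(\lambda_1,\lambda_2)\to(0,0)$. Moreover, as $(\lambda_1,\lambda_2)\to(0,0)$: - if $-1<\alpha<1$, $f(\lambda_1,\lambda_2)\sim c_\alpha(\lambda_1^2+\lambda_2^2)^{\alpha-1}$ with $c_\alpha=\frac{\sigma_\varepsilon^2}{4\pi^2}16^{-\alpha}\Phi(\tfrac14)\int_0^{\infty}\frac{u^\alpha}{(1+u)^2}\,du$; - if $\alpha=1$ and in addition $\Phi$ is $\beta$-Hölder on $[0,\tfrac14]$ for some $\beta>0$ (i.e. $|\Phi(x)-\Phi(y)|\le C|x-y|^\beta$ for some $C>0$ and all $x,y\in[0,\tfrac14]$), then $f(\lambda_1,\lambda_2)\sim c_1\,\bigl|\ln(\lambda_1^2+\lambda_2^2)\bigr|$ with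 $c_1=\frac{\sigma_\varepsilon^2}{4\pi^2}16^{-1}\Phi(\tfrac14)$.
   Context: Here $g\sim h$ as $(\lambda_1,\lambda_2)\to(0,0)$ means $g/h\to1$. *)

theory Defs
  imports "HOL-Analysis.Analysis" "HOL-Library.Landau_Symbols"
begin

definition spec_integrand :: "real \<Rightarrow> (real \<Rightarrow> real) \<Rightarrow> real \<times> real \<Rightarrow> real \<Rightarrow> real" where
  "spec_integrand \<alpha> \<Phi> l x =
     \<Phi> x * (1/4 - x) powr \<alpha> / (1 - 2 * x * (cos (fst l) + cos (snd l)))\<^sup>2"

definition spec_dens :: "real \<Rightarrow> real \<Rightarrow> (real \<Rightarrow> real) \<Rightarrow> real \<times> real \<Rightarrow> real" where
  "spec_dens \<sigma>2 \<alpha> \<Phi> l =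
     \<sigma>2 / (4 * pi\<^sup>2) * (LINT x:{0..1/4}|lborel. spec_integrand \<alpha> \<Phi> l x)"

definition sq_box :: "(real \<times> real) set" where
  "sq_box = {-pi..pi} \<times> {-pi..pi}"

end

theory Submission
  imports Defs "HOL-Real_Asymp.Real_Asymp"
begin


lemma set_integrable_lebesgue_to_lborel:
  fixes f :: "real \<Rightarrow> real"
  assumes "set_integrable lebesgue A f" "set_borel_measurable lborel A f"
  shows "set_integrable lborel A f"
  using assms unfolding set_integrable_def set_borel_measurable_def
  by (subst integrable_completion[symmetric]) auto

lemma powr_from0_int:
  assumes "(b::real) > -1" "c \<ge> 0"
  shows "set_integrable lborel {0..c} (\<lambda>x. x powr b)"
proof (rule set_integrable_lebesgue_to_lborel)
  show "set_integrable lebesgue {0..c} (\<lambda>x. x powr b)"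
    by (rule nonnegative_absolutely_integrable_1[OF integrable_on_powr_from_0[OF assms]]) auto
  show "set_borel_measurable lborel {0..c} (\<lambda>x. x powr b)"
    unfolding set_borel_measurable_def by measurable
qed

lemma powr_quarter_int:
  assumes "(b::real) > -1"
  shows "set_integrable lborel {0..1/4} (\<lambda>x. (1/4 - x) powr b)"
proof -
  have "integrable lborel (\<lambda>x. indicator {0..1/4} x *\<^sub>R x powr b)"
    using powr_from0_int[OF assms, of "1/4"] unfolding set_integrable_def by simp
  from lborel_integrable_real_affine[OF this, of "-1" "1/4"]
  have "integrable lborel (\<lambda>x. indicator {0..1/4} (1/4 + - 1 * x) *\<^sub>R (1/4 + - 1 * x) powr b)"
    by simp
  moreover have "indicator {0..1/4} (1/4 + - 1 * x) = (indicator {0..1/4} x :: real)" for x :: real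
    by (auto simp: indicator_def)
  ultimately show ?thesis unfolding set_integrable_def by simp
qed


definition gi :: "real \<Rightarrow> (real \<Rightarrow> real) \<Rightarrow> real \<Rightarrow> real \<Rightarrow> real" where
  "gi \<alpha> \<Phi> c x = \<Phi> x * (1/4 - x) powr \<alpha> / (1 - 2 * x * c)\<^sup>2"

definition G :: "real \<Rightarrow> (real \<Rightarrow> real) \<Rightarrow> real \<Rightarrow> real" where
  "G \<alpha> \<Phi> c = (LINT x:{0..1/4}|lborel. gi \<alpha> \<Phi> c x)"

lemma sbm_mult:
  fixes \<Phi> h :: "real \<Rightarrow> real"
  assumes "set_borel_measurable lborel A \<Phi>" "h \<in> borel_measurable lborel"
  shows "set_borel_measurable lborel A (\<lambda>x. \<Phi> x * h x)"
proof -
  have "(\<lambda>x. indicator A x *\<^sub>R (\<Phi> x * h x)) = (\<lambda>x. (indicator A x *\<^sub>R \<Phi> x) * h x)"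
    by auto
  then show ?thesis using assms unfolding set_borel_measurable_def
    by (simp add: borel_measurable_times del: scaleR_conv_of_real)
qed

lemma gi_meas:
  assumes "set_borel_measurable lborel {0..1/4} \<Phi>"
  shows "set_borel_measurable lborel {0..1/4} (gi \<alpha> \<Phi> c)"
proof -
  have "set_borel_measurable lborel {0..1/4} (\<lambda>x. \<Phi> x * ((1/4 - x) powr \<alpha> / (1 - 2 * x * c)\<^sup>2))"
    by (rule sbm_mult[OF assms]) measurable
  then show ?thesis unfolding gi_def by (simp add: mult.assoc times_divide_eq_right)
qed

lemma gi_tendsto:
  assumes "u \<longlonglongrightarrow> c0" "c0 \<le> 2" "x \<in> {0..1/4}"
  shows "(\<lambda>n. gi \<alpha> \<Phi> (u n) x) \<longlonglongrightarrow> gi \<alpha> \<Phi> c0 x"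
proof (cases "x = 1/4")
  case True
  then have "gi \<alpha> \<Phi> c x = 0" for c by (simp add: gi_def)
  then show ?thesis by simp
next
  case False
  with assms have x: "0 \<le> x" "x < 1/4" by auto
  have "1 - 2 * x * c0 > 0"
  proof (cases "c0 \<ge> 0")
    case True
    have "2 * x * c0 \<le> 2 * x * 2" using x assms(2) True by (intro mult_left_mono) auto
    then show ?thesis using x by linarith
  next
    case False
    then have "x * c0 \<le> 0" using x by (simp add: mult_nonneg_nonpos)
    then show ?thesis by linarith
  qed
  then show ?thesis unfolding gi_def
    by (intro tendsto_intros assms(1)) auto
qed

lemma G_cont:
  assumes meas: "set_borel_measurable lborel {0..1/4} \<Phi>"
    and w: "set_integrable lborel {0..1/4} w"
    and bound: "\<And>c x. c \<in> S \<Longrightarrow> x \<in> {0..1/4} \<Longrightarrow> \<bar>gi \<alpha> \<Phi> c x\<bar> \<le> w x"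
    and c0: "c0 \<in> S" "c0 \<le> 2"
  shows "continuous (at c0 within S) (G \<alpha> \<Phi>)"
proof (rule continuous_within_sequentiallyI)
  fix u :: "nat \<Rightarrow> real" assume u: "u \<longlonglongrightarrow> c0" "\<forall>n. u n \<in> S"
  have wm: "(\<lambda>x. indicator {0..1/4} x *\<^sub>R w x) \<in> borel_measurable lborel"
    using w unfolding set_integrable_def by auto
  show "(\<lambda>n. G \<alpha> \<Phi> (u n)) \<longlonglongrightarrow> G \<alpha> \<Phi> c0"
    unfolding G_def set_lebesgue_integral_def
  proof (rule integral_dominated_convergence[where w = "\<lambda>x. indicator {0..1/4} x *\<^sub>R w x"])
    show "(\<lambda>x. indicat_real {0..1/4} x *\<^sub>R gi \<alpha> \<Phi> c0 x) \<in> borel_measurable lborel"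
      using gi_meas[OF meas] unfolding set_borel_measurable_def .
    show "(\<lambda>x. indicat_real {0..1/4} x *\<^sub>R gi \<alpha> \<Phi> (u i) x) \<in> borel_measurable lborel" for i
      using gi_meas[OF meas] unfolding set_borel_measurable_def .
    show "integrable lborel (\<lambda>x. indicat_real {0..1/4} x *\<^sub>R w x)"
      using w unfolding set_integrable_def .
    show "AE x in lborel. (\<lambda>i. indicat_real {0..1/4} x *\<^sub>R gi \<alpha> \<Phi> (u i) x)
            \<longlonglongrightarrow> indicat_real {0..1/4} x *\<^sub>R gi \<alpha> \<Phi> c0 x"
    proof (rule AE_I2)
      fix x :: real
      show "(\<lambda>i. indicat_real {0..1/4} x *\<^sub>R gi \<alpha> \<Phi> (u i) x)
            \<longlonglongrightarrow> indicat_real {0..1/4} x *\<^sub>R gi \<alpha> \<Phi> c0 x"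
      proof (cases "x \<in> {0..1/4}")
        case True
        then show ?thesis using gi_tendsto[OF u(1) c0(2) True] by simp
      qed simp
    qed
    show "AE x in lborel. norm (indicat_real {0..1/4} x *\<^sub>R gi \<alpha> \<Phi> (u i) x)
            \<le> indicat_real {0..1/4} x *\<^sub>R w x" for i
    proof (rule AE_I2)
      fix x :: real
      show "norm (indicat_real {0..1/4} x *\<^sub>R gi \<alpha> \<Phi> (u i) x) \<le> indicat_real {0..1/4} x *\<^sub>R w x"
        using bound[OF u(2)[rule_format, of i], of x] by (auto simp: indicator_def)
    qed
  qed
qed

lemma G_int:
  assumes meas: "set_borel_measurable lborel {0..1/4} \<Phi>"
    and w: "set_integrable lborel {0..1/4} w"
    and bound: "\<And>x. x \<in> {0..1/4} \<Longrightarrow> \<bar>gi \<alpha> \<Phi> c x\<bar> \<le> w x"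
  shows "set_integrable lborel {0..1/4} (gi \<alpha> \<Phi> c)"
  by (rule set_integrable_bound[OF w gi_meas[OF meas]])
     (auto intro!: AE_I2 simp: intro: order_trans[OF bound])


definition CC :: "real \<times> real \<Rightarrow> real" where "CC l = cos (fst l) + cos (snd l)"

lemma spec_integrand_gi: "spec_integrand \<alpha> \<Phi> l = gi \<alpha> \<Phi> (CC l)"
  by (auto simp: spec_integrand_def gi_def CC_def fun_eq_iff)

lemma spec_dens_G: "spec_dens \<sigma>2 \<alpha> \<Phi> = (\<lambda>l. \<sigma>2 / (4 * pi\<^sup>2) * G \<alpha> \<Phi> (CC l))"
  by (auto simp: spec_dens_def G_def spec_integrand_gi fun_eq_iff)

lemma CC_le2: "CC l \<le> 2"
  unfolding CC_def using cos_le_one[of "fst l"] cos_le_one[of "snd l"] by linarith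

lemma cos_eq1_imp0:
  assumes "\<bar>a\<bar> \<le> pi" "cos a = 1" shows "a = 0"
proof -
  have "cos (2 * (a/2)) = 1 - 2 * sin (a/2) ^ 2" by (rule cos_double_sin)
  then have "sin (a/2) = 0" using assms(2) by simp
  moreover have "\<bar>a/2\<bar> < pi" using assms(1) pi_gt_zero by linarith
  ultimately show ?thesis using sin_zero_pi_iff by fastforce
qed

lemma CC_lt2:
  assumes "l \<in> sq_box" "l \<noteq> (0,0)" shows "CC l < 2"
proof (rule ccontr)
  assume "\<not> CC l < 2"
  then have "cos (fst l) = 1" "cos (snd l) = 1"
    unfolding CC_def using cos_le_one[of "fst l"] cos_le_one[of "snd l"] by linarith+
  moreover have "\<bar>fst l\<bar> \<le> pi" "\<bar>snd l\<bar> \<le> pi" using assms(1) by (auto simp: sq_box_def)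
  ultimately have "fst l = 0" "snd l = 0" using cos_eq1_imp0 by blast+
  then show False using assms(2) by (cases l) auto
qed

lemma CC_cont: "continuous (at l within S) CC"
  unfolding CC_def by (intro continuous_intros)

lemma bound_big:
  assumes B: "\<forall>x\<in>{0..1/4}. \<bar>\<Phi> x\<bar> \<le> B" and c: "c \<le> 2" and x: "x \<in> {0..1/4}"
  shows "\<bar>gi \<alpha> \<Phi> c x\<bar> \<le> B / 16 * (1/4 - x) powr (\<alpha> - 2)"
proof (cases "x = 1/4")
  case True then show ?thesis unfolding gi_def True by simp
next
  case False
  define t where "t = 1/4 - x"
  have t: "t > 0" "t \<le> 1/4" using x False by (auto simp: t_def)
  have B0: "B \<ge> 0" using B x by force
  have d: "1 - 2 * x * c \<ge> 4 * t"
  proof -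
    have "x * c \<le> x * 2" using x c by (intro mult_left_mono) auto
    then show ?thesis unfolding t_def by (simp add: algebra_simps)
  qed
  have "\<bar>gi \<alpha> \<Phi> c x\<bar> = \<bar>\<Phi> x\<bar> * t powr \<alpha> / (1 - 2 * x * c)\<^sup>2"
    unfolding gi_def t_def by (simp add: abs_mult)
  also have "\<dots> \<le> B * t powr \<alpha> / (4 * t)\<^sup>2"
    using t d B B0 x by (intro frac_le mult_right_mono power_mono) auto
  also have "\<dots> = B / 16 * (t powr \<alpha> / t powr 2)"
    using t by (simp add: power2_eq_square)
  also have "t powr \<alpha> / t powr 2 = t powr (\<alpha> - 2)" by (simp add: powr_diff)
  finally show ?thesis by (simp add: t_def)
qed

lemma bound_small:
  assumes B: "\<forall>x\<in>{0..1/4}. \<bar>\<Phi> x\<bar> \<le> B" and c1: "c1 < 2" and c: "c \<le> c1" and x: "x \<in> {0..1/4}"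
  shows "\<bar>gi \<alpha> \<Phi> c x\<bar> \<le> B / (min 1 ((2 - c1)/2))\<^sup>2 * (1/4 - x) powr \<alpha>"
proof -
  define m where "m = min 1 ((2 - c1)/2)"
  have m: "m > 0" using c1 by (auto simp: m_def)
  have B0: "B \<ge> 0" using B x by force
  have d: "1 - 2 * x * c \<ge> m"
  proof (cases "c \<ge> 0")
    case True
    have "x * c \<le> (1/4) * c1" using x c True by (intro mult_mono) auto
    then have "(2 - c1)/2 \<le> 1 - 2 * x * c" by (simp add: field_simps)
    then show ?thesis unfolding m_def min_le_iff_disj by blast
  next
    case False
    then have "x * c \<le> 0" using x by (simp add: mult_nonneg_nonpos)
    then have "1 \<le> 1 - 2 * x * c" by (simp add: algebra_simps)
    then show ?thesis unfolding m_def min_le_iff_disj by blast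
  qed
  have "\<bar>gi \<alpha> \<Phi> c x\<bar> = \<bar>\<Phi> x\<bar> * (1/4 - x) powr \<alpha> / (1 - 2 * x * c)\<^sup>2"
    unfolding gi_def by (simp add: abs_mult)
  also have "\<dots> \<le> B * (1/4 - x) powr \<alpha> / m\<^sup>2"
    using m d B B0 x by (intro frac_le mult_right_mono power_mono) auto
  finally show ?thesis by (simp add: m_def)
qed

lemma part_i:
  assumes meas: "set_borel_measurable lborel {0..1/4} \<Phi>"
    and B: "\<forall>x\<in>{0..1/4}. \<bar>\<Phi> x\<bar> \<le> B" and a: "\<alpha> > 1"
  shows "set_integrable lborel {0..1/4} (spec_integrand \<alpha> \<Phi> l)"
    and "continuous (at l within S) (spec_dens \<sigma>2 \<alpha> \<Phi>)"
proof -
  have w: "set_integrable lborel {0..1/4} (\<lambda>x. B / 16 * (1/4 - x) powr (\<alpha> - 2))"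
    using powr_quarter_int[of "\<alpha> - 2"] a by (intro set_integrable_mult_right) auto
  show "set_integrable lborel {0..1/4} (spec_integrand \<alpha> \<Phi> l)"
    unfolding spec_integrand_gi by (rule G_int[OF meas w bound_big[OF B CC_le2]])
  have "continuous (at (CC l) within {..2}) (G \<alpha> \<Phi>)"
    by (rule G_cont[OF meas w bound_big[OF B]]) (auto simp: CC_le2)
  then have "continuous (at (CC l) within CC ` S) (G \<alpha> \<Phi>)"
    by (rule continuous_within_subset) (auto simp: CC_le2)
  then have "continuous (at l within S) (\<lambda>l. G \<alpha> \<Phi> (CC l))"
    by (rule continuous_within_compose2[OF CC_cont])
  then show "continuous (at l within S) (spec_dens \<sigma>2 \<alpha> \<Phi>)"
    unfolding spec_dens_G by (rule continuous_mult[OF continuous_const])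
qed

lemma part_ii_cont:
  assumes meas: "set_borel_measurable lborel {0..1/4} \<Phi>"
    and B: "\<forall>x\<in>{0..1/4}. \<bar>\<Phi> x\<bar> \<le> B" and a: "\<alpha> > -1" and l: "CC l < 2"
  shows "set_integrable lborel {0..1/4} (spec_integrand \<alpha> \<Phi> l)"
    and "continuous (at l within S) (spec_dens \<sigma>2 \<alpha> \<Phi>)"
proof -
  define c1 where "c1 = (CC l + 2) / 2"
  have c1: "c1 < 2" "CC l < c1" using l by (auto simp: c1_def)
  have w: "set_integrable lborel {0..1/4} (\<lambda>x. B / (min 1 ((2 - c1)/2))\<^sup>2 * (1/4 - x) powr \<alpha>)"
    using powr_quarter_int[of "\<alpha>"] a by (intro set_integrable_mult_right) auto
  show "set_integrable lborel {0..1/4} (spec_integrand \<alpha> \<Phi> l)"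
    unfolding spec_integrand_gi by (rule G_int[OF meas w bound_small[OF B c1(1)]]) (use c1 in auto)
  have "continuous (at (CC l) within {..<c1}) (G \<alpha> \<Phi>)"
    by (rule G_cont[OF meas w bound_small[OF B c1(1)]]) (use c1 in auto)
  moreover have "at (CC l) within {..<c1} = at (CC l)"
    using c1 by (intro at_within_open) auto
  ultimately have "isCont (G \<alpha> \<Phi>) (CC l)"
    by simp
  then have "continuous (at l within S) (\<lambda>l. G \<alpha> \<Phi> (CC l))"
    by (rule continuous_within_compose3[OF _ CC_cont])
  then show "continuous (at l within S) (spec_dens \<sigma>2 \<alpha> \<Phi>)"
    unfolding spec_dens_G by (rule continuous_mult[OF continuous_const])
qed


definition Kf :: "real \<Rightarrow> real \<Rightarrow> real" where "Kf \<alpha> u = u powr \<alpha> / (1 + u)\<^sup>2"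
definition KI :: "real \<Rightarrow> real \<Rightarrow> real" where "KI \<alpha> T = (LINT u:{0..T}|lborel. Kf \<alpha> u)"
definition J0 :: "real \<Rightarrow> real \<Rightarrow> real" where
  "J0 \<alpha> s = (LINT x:{0..1/4}|lborel. (1/4 - x) powr \<alpha> / (1 - 4 * x + s / 2)\<^sup>2)"

lemma J0_eq:
  assumes s: "s > 0"
  shows "J0 \<alpha> s = (s/8) * ((s/8) powr \<alpha> * 4 / s\<^sup>2) * KI \<alpha> (2/s)"
proof -
  define h where "h x = (1/4 - x) powr \<alpha> / (1 - 4 * x + s / 2)\<^sup>2" for x
  have "J0 \<alpha> s = integral\<^sup>L lborel (\<lambda>x. indicator {0..1/4} x *\<^sub>R h x)"
    unfolding J0_def set_lebesgue_integral_def h_def ..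
  also have "\<dots> = \<bar>- s/8\<bar> *\<^sub>R integral\<^sup>L lborel (\<lambda>u. indicator {0..1/4} (1/4 + (- s/8) * u) *\<^sub>R h (1/4 + (- s/8) * u))"
    by (rule lborel_integral_real_affine) (use s in auto)
  also have "(\<lambda>u. indicator {0..1/4} (1/4 + (- s/8) * u) *\<^sub>R h (1/4 + (- s/8) * u))
           = (\<lambda>u. ((s/8) powr \<alpha> * 4 / s\<^sup>2) * (indicator {0..2/s} u *\<^sub>R Kf \<alpha> u))"
  proof
    fix u :: real
    show "indicator {0..1/4} (1/4 + (- s/8) * u) *\<^sub>R h (1/4 + (- s/8) * u)
           = ((s/8) powr \<alpha> * 4 / s\<^sup>2) * (indicator {0..2/s} u *\<^sub>R Kf \<alpha> u)"
    proof (cases "u \<in> {0..2/s}")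
      case True
      then have u: "0 \<le> u" "u \<le> 2/s" by auto
      have "s * u \<le> 2" using u s by (simp add: field_simps)
      then have i: "1/4 + (- s/8) * u \<in> {0..1/4}" using u s by auto
      have e1: "1/4 - (1/4 + (- s/8) * u) = (s/8) * u" by simp
      have e2: "1 - 4 * (1/4 + (- s/8) * u) + s / 2 = s * (1 + u) / 2" by (simp add: field_simps)
      have "h (1/4 + (- s/8) * u) = (s/8) powr \<alpha> * u powr \<alpha> / (s * (1 + u) / 2)\<^sup>2"
      proof -
        have "(s/8*u) powr \<alpha> = (s/8) powr \<alpha> * u powr \<alpha>" using s u powr_mult[of "s/8" u \<alpha>] by simp
        then show ?thesis unfolding h_def e1 e2 by simp
      qed
      also have "\<dots> = ((s/8) powr \<alpha> * 4 / s\<^sup>2) * Kf \<alpha> u"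
        unfolding Kf_def using s u by (simp add: field_simps power2_eq_square)
      finally show ?thesis using True i by simp
    next
      case False
      have "1/4 + (- s/8) * u \<notin> {0..1/4}"
      proof
        assume "1/4 + (- s/8) * u \<in> {0..1/4}"
        then have "0 \<le> s * u" "s * u \<le> 2" by auto
        then have "0 \<le> u" "u \<le> 2/s" using s by (auto simp: field_simps zero_le_mult_iff)
        then show False using False by auto
      qed
      then show ?thesis using False by simp
    qed
  qed
  also have "integral\<^sup>L lborel (\<lambda>u. ((s/8) powr \<alpha> * 4 / s\<^sup>2) * (indicator {0..2/s} u *\<^sub>R Kf \<alpha> u))
       = ((s/8) powr \<alpha> * 4 / s\<^sup>2) * KI \<alpha> (2/s)"
    unfolding KI_def set_lebesgue_integral_def by simp
  finally show ?thesis using s by simp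
qed

lemma Kf_nonneg: "u \<ge> 0 \<Longrightarrow> Kf \<alpha> u \<ge> 0"
  unfolding Kf_def by simp

lemma Kf_int_0_1:
  assumes "\<alpha> > -1"
  shows "set_integrable lborel {0..1} (Kf \<alpha>)"
proof (rule set_integrable_bound[OF powr_from0_int[OF assms zero_le_one]])
  show "set_borel_measurable lborel {0..1} (Kf \<alpha>)"
    unfolding set_borel_measurable_def Kf_def by measurable
  show "AE x in lborel. x \<in> {0..1} \<longrightarrow> norm (Kf \<alpha> x) \<le> norm (x powr \<alpha>)"
  proof (rule AE_I2, rule impI)
    fix x :: real assume x: "x \<in> {0..1}"
    have "1 \<le> (1 + x)\<^sup>2" using x by (simp add: power2_eq_square) (smt (verit) mult_le_cancel_left1)
    then have "x powr \<alpha> / (1 + x)\<^sup>2 \<le> x powr \<alpha> / 1"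
      by (intro divide_left_mono) auto
    then show "norm (Kf \<alpha> x) \<le> norm (x powr \<alpha>)" using x by (simp add: Kf_def)
  qed
qed

lemma Kf_int_1_inf:
  assumes "\<alpha> < 1"
  shows "set_integrable lborel {1..} (Kf \<alpha>)"
proof -
  have "((\<lambda>x. x powr (\<alpha> - 2)) has_integral -(1 powr (\<alpha> - 2 + 1)) / (\<alpha> - 2 + 1)) {1..}"
    by (rule has_integral_powr_to_inf) (use assms in auto)
  then have "(\<lambda>x::real. x powr (\<alpha> - 2)) integrable_on {1..}" by blast
  then have "set_integrable lebesgue {1..} (\<lambda>x::real. x powr (\<alpha> - 2))"
    by (rule nonnegative_absolutely_integrable_1) auto
  then have I: "set_integrable lborel {1..} (\<lambda>x::real. x powr (\<alpha> - 2))"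
    by (rule set_integrable_lebesgue_to_lborel) (unfold set_borel_measurable_def, measurable)
  show ?thesis
  proof (rule set_integrable_bound[OF I])
    show "set_borel_measurable lborel {1..} (Kf \<alpha>)"
      unfolding set_borel_measurable_def Kf_def by measurable
    show "AE x in lborel. x \<in> {1..} \<longrightarrow> norm (Kf \<alpha> x) \<le> norm (x powr (\<alpha> - 2))"
    proof (rule AE_I2, rule impI)
      fix x :: real assume x: "x \<in> {1..}"
      then have x0: "x > 0" by auto
      have "x\<^sup>2 \<le> (1 + x)\<^sup>2" using x by (intro power_mono) auto
      then have "x powr \<alpha> / (1 + x)\<^sup>2 \<le> x powr \<alpha> / x\<^sup>2"
        using x0 by (intro divide_left_mono) auto
      also have "x powr \<alpha> / x\<^sup>2 = x powr (\<alpha> - 2)"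
        using x0 by (simp add: powr_diff flip: powr_numeral)
      finally show "norm (Kf \<alpha> x) \<le> norm (x powr (\<alpha> - 2))" using x0 by (simp add: Kf_def)
    qed
  qed
qed

lemma Kf_int_pos:
  assumes "\<alpha> > -1" "\<alpha> < 1"
  shows "set_integrable lborel {0<..} (Kf \<alpha>)"
proof -
  have "set_integrable lborel ({0..1} \<union> {1..}) (Kf \<alpha>)"
    by (rule set_integrable_Un[OF Kf_int_0_1 Kf_int_1_inf]) (use assms in auto)
  then show ?thesis by (rule set_integrable_subset) auto
qed


definition Ia :: "real \<Rightarrow> real" where "Ia \<alpha> = (LINT u:{0<..}|lborel. Kf \<alpha> u)"

lemma KI_lim:
  assumes "\<alpha> > -1" "\<alpha> < 1"
  shows "(KI \<alpha> \<longlongrightarrow> Ia \<alpha>) at_top"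
proof -
  have int: "set_integrable lborel {0<..} (Kf \<alpha>)" by (rule Kf_int_pos[OF assms])
  let ?w = "\<lambda>u. indicator {0<..} u *\<^sub>R Kf \<alpha> u"
  have "((\<lambda>t. integral\<^sup>L lborel (\<lambda>u. indicator {0..t} u *\<^sub>R Kf \<alpha> u)) \<longlongrightarrow> integral\<^sup>L lborel ?w) at_top"
  proof (rule integral_dominated_convergence_at_top[where w = ?w])
    show "?w \<in> borel_measurable lborel" using int unfolding set_integrable_def by auto
    show "(\<lambda>u. indicator {0..t} u *\<^sub>R Kf \<alpha> u) \<in> borel_measurable lborel" for t :: real
      unfolding Kf_def by measurable
    show "integrable lborel ?w" using int unfolding set_integrable_def by auto
    show "AE x in lborel. ((\<lambda>t. indicator {0..t} x *\<^sub>R Kf \<alpha> x) \<longlongrightarrow> ?w x) at_top"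
    proof (rule AE_I2)
      fix x :: real
      show "((\<lambda>t. indicator {0..t} x *\<^sub>R Kf \<alpha> x) \<longlongrightarrow> ?w x) at_top"
      proof (cases "x > 0")
        case True
        have "eventually (\<lambda>t. indicator {0..t} x *\<^sub>R Kf \<alpha> x = ?w x) at_top"
          using eventually_ge_at_top[of x] by eventually_elim (use True in auto)
        then show ?thesis by (rule tendsto_eventually)
      next
        case False
        then have "(\<lambda>t. indicator {0..t} x *\<^sub>R Kf \<alpha> x) = (\<lambda>t. 0)"
          by (cases "x = 0") (auto simp: Kf_def fun_eq_iff)
        moreover have "?w x = 0" using False by simp
        ultimately show ?thesis by (simp only:) (rule tendsto_const)
      qed
    qed
    show "\<forall>\<^sub>F t in at_top. AE x in lborel. norm (indicator {0..t} x *\<^sub>R Kf \<alpha> x) \<le> ?w x"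
    proof (intro always_eventually allI AE_I2)
      fix t x :: real
      show "norm (indicator {0..t} x *\<^sub>R Kf \<alpha> x) \<le> ?w x"
        by (cases "x = 0") (auto simp: Kf_def indicator_def)
    qed
  qed
  then show ?thesis unfolding KI_def Ia_def set_lebesgue_integral_def .
qed

lemma Ia_pos:
  assumes "\<alpha> > -1" "\<alpha> < 1"
  shows "Ia \<alpha> > 0"
proof -
  have int: "set_integrable lborel {0<..} (Kf \<alpha>)" by (rule Kf_int_pos[OF assms])
  have "(1/18::real) = integral\<^sup>L lborel (\<lambda>u::real. indicator {1..2} u *\<^sub>R (1/18::real))"
    using set_integral_const[where A="{1..2::real}" and M=lborel and c="1/18::real"]
    unfolding set_lebesgue_integral_def by simp
  also have "\<dots> \<le> integral\<^sup>L lborel (\<lambda>u. indicator {0<..} u *\<^sub>R Kf \<alpha> u)"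
  proof (rule integral_mono)
    show "integrable lborel (\<lambda>u::real. indicator {1..2} u *\<^sub>R (1/18::real))"
      by (simp add: integrable_real_mult_indicator)
    show "integrable lborel (\<lambda>u. indicator {0<..} u *\<^sub>R Kf \<alpha> u)"
      using int unfolding set_integrable_def .
    fix u :: real
    show "indicator {1..2} u *\<^sub>R (1/18::real) \<le> indicator {0<..} u *\<^sub>R Kf \<alpha> u"
    proof (cases "u \<in> {1..2}")
      case True
      then have u: "1 \<le> u" "u \<le> 2" by auto
      have "u powr (-1) \<le> u powr \<alpha>" using u assms by (intro powr_mono) auto
      moreover have "u powr (-1) = 1 / u" using u by (simp add: powr_minus_divide)
      ultimately have a: "1 / u \<le> u powr \<alpha>" by simp
      have "1/2 \<le> 1 / u" using u by (simp add: field_simps)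
      with a have a2: "1/2 \<le> u powr \<alpha>" by linarith
      have "(1 + u)\<^sup>2 \<le> 3\<^sup>2" using u by (intro power_mono) auto
      then have b: "(1 + u)\<^sup>2 \<le> 9" by simp
      have "(1/2) / 9 \<le> u powr \<alpha> / (1 + u)\<^sup>2"
        using a2 b u by (intro frac_le) auto
      then show ?thesis using True u by (auto simp: Kf_def)
    next
      case False
      then show ?thesis by (auto simp: indicator_def Kf_def)
    qed
  qed
  finally show ?thesis unfolding Ia_def set_lebesgue_integral_def by simp
qed

lemma KI_one:
  assumes "T \<ge> 0"
  shows "KI 1 T = ln (1 + T) + 1 / (1 + T) - 1"
proof -
  have "KI 1 T = (LINT u:{0..T}|lborel. u / (1 + u)\<^sup>2)"
    unfolding KI_def by (rule set_lebesgue_integral_cong) (auto simp: Kf_def)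
  also have "\<dots> = integral\<^sup>L lborel (\<lambda>u. indicator {0..T} u *\<^sub>R (u / (1 + u)\<^sup>2))"
    unfolding set_lebesgue_integral_def ..
  also have "\<dots> = (ln (1 + T) + 1 / (1 + T)) - (ln (1 + 0) + 1 / (1 + 0))"
  proof (rule integral_FTC_atLeastAtMost[OF assms])
    fix x :: real assume x: "0 \<le> x" "x \<le> T"
    have "((\<lambda>u. ln (1 + u) + 1 / (1 + u)) has_real_derivative (x / (1 + x)\<^sup>2)) (at x within {0..T})"
      by (insert x, (rule derivative_eq_intros refl | simp)+) (simp add: divide_simps power2_eq_square)
    then show "((\<lambda>u. ln (1 + u) + 1 / (1 + u)) has_vector_derivative x / (1 + x)\<^sup>2) (at x within {0..T})"
      by (simp add: has_real_derivative_iff_has_vector_derivative)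
  next
    show "continuous_on {0..T} (\<lambda>u. u / (1 + u)\<^sup>2)"
      by (intro continuous_intros) auto
  qed
  finally show ?thesis by simp
qed

lemma J0_one:
  assumes "s > 0"
  shows "J0 1 s = 1/16 * (ln (1 + 2/s) + 1 / (1 + 2/s) - 1)"
  using J0_eq[OF assms, of 1] KI_one[of "2/s"] assms by (simp add: power2_eq_square)


definition Jf :: "real \<Rightarrow> real \<Rightarrow> real" where "Jf \<alpha> s = G \<alpha> (\<lambda>_. 1) (2 - s)"

lemma ev_s: "eventually (\<lambda>s::real. 0 < s \<and> s < 2) (at_right 0)"
  using eventually_at_right_real[of 0 2] by simp

lemma one_meas: "set_borel_measurable lborel {0..1/4::real} (\<lambda>_. 1::real)"
  unfolding set_borel_measurable_def by measurable

lemma gi_int_s: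
  assumes meas: "set_borel_measurable lborel {0..1/4} \<Phi>"
    and B: "\<forall>x\<in>{0..1/4}. \<bar>\<Phi> x\<bar> \<le> B" and a: "\<alpha> > -1" and s: "s > 0"
  shows "set_integrable lborel {0..1/4} (gi \<alpha> \<Phi> (2 - s))"
proof -
  have c1: "2 - s < 2" using s by simp
  have w: "set_integrable lborel {0..1/4} (\<lambda>x. B / (min 1 ((2 - (2 - s))/2))\<^sup>2 * (1/4 - x) powr \<alpha>)"
    using powr_quarter_int[of "\<alpha>"] a by (intro set_integrable_mult_right) auto
  show ?thesis by (rule G_int[OF meas w bound_small[OF B c1 order_refl]])
qed

lemma gi_one: "gi \<alpha> (\<lambda>_. 1) c x = (1/4 - x) powr \<alpha> / (1 - 2 * x * c)\<^sup>2"
  by (simp add: gi_def)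

lemma J0_int:
  fixes \<alpha> s :: real
  assumes a: "\<alpha> > -1" and s: "s > 0"
  shows "set_integrable lborel {0..1/4} (\<lambda>x. (1/4 - x) powr \<alpha> / (1 - 4 * x + s / 2)\<^sup>2)"
proof (rule set_integrable_bound)
  show "set_integrable lborel {0..1/4} (\<lambda>x. (4 / s\<^sup>2) * (1/4 - x) powr \<alpha>)"
    using powr_quarter_int[of "\<alpha>"] a by (intro set_integrable_mult_right) auto
  show "set_borel_measurable lborel {0..1/4} (\<lambda>x. (1/4 - x) powr \<alpha> / (1 - 4 * x + s / 2)\<^sup>2)"
    unfolding set_borel_measurable_def by measurable
  show "AE x in lborel. x \<in> {0..1/4} \<longrightarrow>
      norm ((1/4 - x) powr \<alpha> / (1 - 4 * x + s / 2)\<^sup>2) \<le> norm ((4 / s\<^sup>2) * (1/4 - x) powr \<alpha>)"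
  proof (rule AE_I2, rule impI)
    fix x :: real assume x: "x \<in> {0..1/4}"
    have d: "s / 2 \<le> 1 - 4 * x + s / 2" using x by auto
    have "(1/4 - x) powr \<alpha> / (1 - 4 * x + s / 2)\<^sup>2 \<le> (1/4 - x) powr \<alpha> / (s/2)\<^sup>2"
      using s d by (intro divide_left_mono power_mono mult_pos_pos) auto
    also have "\<dots> = (4 / s\<^sup>2) * (1/4 - x) powr \<alpha>" by (simp add: power2_eq_square)
    finally show "norm ((1/4 - x) powr \<alpha> / (1 - 4 * x + s / 2)\<^sup>2) \<le> norm ((4 / s\<^sup>2) * (1/4 - x) powr \<alpha>)"
      using s x by simp
  qed
qed

lemma D_facts:
  fixes x s :: real
  assumes x: "x \<in> {0..1/4}" and s: "0 < s" "s \<le> 2"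
  shows "s / 2 \<le> 1 - 2 * x * (2 - s)"
    and "1 - 4 * x \<le> 1 - 2 * x * (2 - s)"
    and "1 - 2 * x * (2 - s) \<le> 1 - 4 * x + s / 2"
    and "1 - 4 * x + s / 2 \<le> (1 + s/2) * (1 - 2 * x * (2 - s))"
proof -
  have e: "1 - 2 * x * (2 - s) = (1 - 4 * x) * (1 - s/2) + s/2" by (simp add: algebra_simps)
  have h1: "0 \<le> 1 - 4 * x" using x by auto
  have h2: "0 \<le> 1 - s/2" using s by auto
  have "0 \<le> (1 - 4 * x) * (1 - s/2)" using h1 h2 by simp
  then show "s / 2 \<le> 1 - 2 * x * (2 - s)" unfolding e by linarith
  have "0 \<le> x * s" using x s by simp
  then show "1 - 4 * x \<le> 1 - 2 * x * (2 - s)" by (simp add: algebra_simps)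
  have "0 \<le> (1 - 4 * x) * s" using h1 s by simp
  then show "1 - 2 * x * (2 - s) \<le> 1 - 4 * x + s / 2" by (simp add: algebra_simps)
  have "0 \<le> x * s * s" using x s by simp
  then show "1 - 4 * x + s / 2 \<le> (1 + s/2) * (1 - 2 * x * (2 - s))"
    by (simp add: algebra_simps)
qed

lemma J0_le_Jf:
  assumes a: "\<alpha> > -1" and s: "0 < s" "s \<le> 2"
  shows "J0 \<alpha> s \<le> Jf \<alpha> s" and "Jf \<alpha> s \<le> (1 + s/2)\<^sup>2 * J0 \<alpha> s"
proof -
  have I1: "set_integrable lborel {0..1/4} (gi \<alpha> (\<lambda>_. 1) (2 - s))"
    by (rule gi_int_s[OF one_meas _ a s(1), of 1]) auto
  have I0: "set_integrable lborel {0..1/4} (\<lambda>x. (1/4 - x) powr \<alpha> / (1 - 4 * x + s / 2)\<^sup>2)"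
    by (rule J0_int[OF a s(1)])
  show "J0 \<alpha> s \<le> Jf \<alpha> s"
    unfolding J0_def Jf_def G_def
  proof (rule set_integral_mono[OF I0 I1])
    fix x :: real assume x: "x \<in> {0..1/4}"
    note D = D_facts[OF x s]
    have "0 < s/2" using s by simp
    then show "(1/4 - x) powr \<alpha> / (1 - 4 * x + s / 2)\<^sup>2 \<le> gi \<alpha> (\<lambda>_. 1) (2 - s) x"
      unfolding gi_one using D by (intro divide_left_mono power_mono mult_pos_pos) auto
  qed
  have "Jf \<alpha> s \<le> (LINT x:{0..1/4}|lborel. (1 + s/2)\<^sup>2 * ((1/4 - x) powr \<alpha> / (1 - 4 * x + s / 2)\<^sup>2))"
    unfolding Jf_def G_def
  proof (rule set_integral_mono[OF I1])
    show "set_integrable lborel {0..1/4} (\<lambda>x. (1 + s/2)\<^sup>2 * ((1/4 - x) powr \<alpha> / (1 - 4 * x + s / 2)\<^sup>2))"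
      using I0 by (rule set_integrable_mult_right)
    fix x :: real assume x: "x \<in> {0..1/4}"
    note D = D_facts[OF x s]
    have p: "0 < s/2" using s by simp
    have "gi \<alpha> (\<lambda>_. 1) (2 - s) x = (1 + s/2)\<^sup>2 * ((1/4 - x) powr \<alpha> / ((1 + s/2) * (1 - 2 * x * (2 - s)))\<^sup>2)"
      unfolding gi_one using s by (simp add: power_mult_distrib)
    also have "\<dots> \<le> (1 + s/2)\<^sup>2 * ((1/4 - x) powr \<alpha> / (1 - 4 * x + s / 2)\<^sup>2)"
      using D p x by (intro mult_left_mono divide_left_mono power_mono mult_pos_pos) auto
    finally show "gi \<alpha> (\<lambda>_. 1) (2 - s) x \<le> (1 + s/2)\<^sup>2 * ((1/4 - x) powr \<alpha> / (1 - 4 * x + s / 2)\<^sup>2)" .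
  qed
  then show "Jf \<alpha> s \<le> (1 + s/2)\<^sup>2 * J0 \<alpha> s" unfolding J0_def by (simp only: set_integral_mult_right)
qed

lemma Jf_equiv:
  assumes a: "\<alpha> > -1" and lim: "filterlim (J0 \<alpha>) at_top (at_right 0)"
  shows "Jf \<alpha> \<sim>[at_right 0] J0 \<alpha>"
proof (rule asymp_equivI')
  have ev: "eventually (\<lambda>s. 0 < s \<and> s < 2 \<and> J0 \<alpha> s > 0) (at_right 0)"
    using ev_s filterlim_at_top_dense[THEN iffD1, OF lim, rule_format, of 0]
    by eventually_elim auto
  show "((\<lambda>s. Jf \<alpha> s / J0 \<alpha> s) \<longlongrightarrow> 1) (at_right 0)"
  proof (rule tendsto_sandwich[where f = "\<lambda>_. 1" and h = "\<lambda>s. (1 + s/2)\<^sup>2"])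
    show "eventually (\<lambda>s. 1 \<le> Jf \<alpha> s / J0 \<alpha> s) (at_right 0)"
      using ev by eventually_elim (use J0_le_Jf[OF a] in auto)
    show "eventually (\<lambda>s. Jf \<alpha> s / J0 \<alpha> s \<le> (1 + s/2)\<^sup>2) (at_right 0)"
      using ev by eventually_elim (use J0_le_Jf[OF a] in \<open>auto simp: divide_le_eq\<close>)
    show "((\<lambda>s::real. 1::real) \<longlongrightarrow> 1) (at_right 0)" by simp
    show "((\<lambda>s::real. (1 + s/2)\<^sup>2) \<longlongrightarrow> 1) (at_right 0)" by real_asymp
  qed
qed


lemma ratio_to_zero:
  fixes R J :: "'a \<Rightarrow> real"
  assumes J: "filterlim J at_top F"
    and H: "\<And>e. e > 0 \<Longrightarrow> \<exists>M. eventually (\<lambda>s. \<bar>R s\<bar> \<le> e * J s + M) F"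
  shows "((\<lambda>s. R s / J s) \<longlongrightarrow> 0) F"
  unfolding tendsto_iff
proof (intro allI impI)
  fix e :: real assume e: "e > 0"
  obtain M where M: "eventually (\<lambda>s. \<bar>R s\<bar> \<le> e/2 * J s + M) F" using H[of "e/2"] e by auto
  have J2: "eventually (\<lambda>s. max 1 (2 * \<bar>M\<bar> / e) < J s) F"
    using J filterlim_at_top_dense by blast
  show "eventually (\<lambda>s. dist (R s / J s) 0 < e) F"
    using M J2
  proof eventually_elim
    case (elim s)
    have Jp: "J s > 0" using elim(2) by linarith
    have "2 * \<bar>M\<bar> / e < J s" using elim(2) by linarith
    then have "2 * \<bar>M\<bar> < J s * e" using e by (simp add: divide_less_eq)
    then have "\<bar>R s\<bar> < e * J s" using elim(1) by (simp add: algebra_simps)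
    then have "\<bar>R s\<bar> / J s < e" using Jp by (simp add: divide_less_eq)
    then show ?case using Jp by (simp add: abs_divide)
  qed
qed

lemma eps_bound:
  assumes meas: "set_borel_measurable lborel {0..1/4} \<Phi>"
    and B: "\<forall>x\<in>{0..1/4}. \<bar>\<Phi> x\<bar> \<le> B" and a: "\<alpha> > -1"
    and cont: "continuous (at (1/4) within {0..1/4}) \<Phi>" and e: "e > 0"
  shows "\<exists>M. \<forall>s. 0 < s \<longrightarrow> s \<le> 2 \<longrightarrow> \<bar>G \<alpha> \<Phi> (2 - s) - \<Phi> (1/4) * Jf \<alpha> s\<bar> \<le> e * Jf \<alpha> s + M"
proof -
  obtain d where d: "d > 0" and hd: "\<forall>x\<in>{0..1/4}. dist x (1/4) < d \<longrightarrow> dist (\<Phi> x) (\<Phi> (1/4)) < e"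
    using cont e unfolding continuous_within_eps_delta by blast
  have B0: "B \<ge> 0" using B by force
  have Bq: "\<bar>\<Phi> (1/4)\<bar> \<le> B" using B by auto
  define C where "C = 2 * B / (16 * d\<^sup>2)"
  have C0: "C \<ge> 0" using B0 by (simp add: C_def)
  define M where "M = C * (LINT x:{0..1/4}|lborel. (1/4 - x) powr \<alpha>)"
  have Ip: "set_integrable lborel {0..1/4} (\<lambda>x. (1/4 - x) powr \<alpha>)" by (rule powr_quarter_int[OF a])
  show ?thesis
  proof (intro exI allI impI)
    fix s :: real assume s: "0 < s" "s \<le> 2"
    let ?k = "gi \<alpha> (\<lambda>_. 1) (2 - s)"
    have Ig: "set_integrable lborel {0..1/4} (gi \<alpha> \<Phi> (2 - s))" by (rule gi_int_s[OF meas B a s(1)])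
    have Ik: "set_integrable lborel {0..1/4} ?k" by (rule gi_int_s[OF one_meas _ a s(1), of 1]) auto
    let ?h = "\<lambda>x. gi \<alpha> \<Phi> (2 - s) x - \<Phi> (1/4) * ?k x"
    let ?g = "\<lambda>x. e * ?k x + C * (1/4 - x) powr \<alpha>"
    have Ih: "set_integrable lborel {0..1/4} ?h"
      using Ig Ik by (intro set_integral_diff(1) set_integrable_mult_right)
    have Ig2: "set_integrable lborel {0..1/4} ?g"
      using Ik Ip by (intro set_integral_add(1) set_integrable_mult_right)
    have Ih': "set_integrable lborel {0..1/4} (\<lambda>x. - ?h x)"
      using Ih by (rule set_integrable_mult_right[where a = "-1", simplified])
    have pw: "\<bar>?h x\<bar> \<le> ?g x" if x: "x \<in> {0..1/4}" for x
    proof -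
      have id: "?h x = (\<Phi> x - \<Phi> (1/4)) * ?k x" by (simp add: gi_def left_diff_distrib diff_divide_distrib)
      have k0: "?k x \<ge> 0" by (simp add: gi_one)
      have p0: "(1/4 - x) powr \<alpha> \<ge> 0" by simp
      show ?thesis
      proof (cases "1/4 - x < d")
        case True
        then have "dist x (1/4) < d" using x by (simp add: dist_real_def)
        then have "\<bar>\<Phi> x - \<Phi> (1/4)\<bar> < e" using hd x by (auto simp: dist_real_def)
        then have "\<bar>\<Phi> x - \<Phi> (1/4)\<bar> * ?k x \<le> e * ?k x" using k0 by (intro mult_right_mono) auto
        moreover have "0 \<le> C * (1/4 - x) powr \<alpha>" using C0 by simp
        ultimately show ?thesis unfolding id using k0 by (simp add: abs_mult)
      next
        case False
        have D: "1 - 4 * x \<le> 1 - 2 * x * (2 - s)" using D_facts[OF x s] by simp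
        have "4 * d \<le> 1 - 4 * x" using False by simp
        then have D2: "(4 * d)\<^sup>2 \<le> (1 - 2 * x * (2 - s))\<^sup>2" using D d by (intro power_mono) auto
        have "0 < (4 * d)\<^sup>2" using d by simp
        with D2 have Dp: "0 < (1 - 2 * x * (2 - s))\<^sup>2" by linarith
        have "?k x \<le> (1/4 - x) powr \<alpha> / (4 * d)\<^sup>2"
          unfolding gi_one using D2 d Dp by (intro divide_left_mono) (auto intro: mult_pos_pos)
        moreover have "\<bar>\<Phi> x - \<Phi> (1/4)\<bar> \<le> 2 * B" using B x Bq by (smt (verit))
        ultimately have "\<bar>\<Phi> x - \<Phi> (1/4)\<bar> * ?k x \<le> (2 * B) * ((1/4 - x) powr \<alpha> / (4 * d)\<^sup>2)"
          using k0 B0 by (intro mult_mono) auto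
        also have "\<dots> = C * (1/4 - x) powr \<alpha>" by (simp add: C_def power2_eq_square)
        finally have "\<bar>\<Phi> x - \<Phi> (1/4)\<bar> * ?k x \<le> C * (1/4 - x) powr \<alpha>" .
        moreover have "0 \<le> e * ?k x" using e k0 by simp
        ultimately show ?thesis unfolding id using k0 by (simp add: abs_mult)
      qed
    qed
    have eqh: "(LINT x:{0..1/4}|lborel. ?h x) = G \<alpha> \<Phi> (2 - s) - \<Phi> (1/4) * Jf \<alpha> s"
      using Ig Ik unfolding G_def Jf_def by (subst set_integral_diff(2)) auto
    have eqg: "(LINT x:{0..1/4}|lborel. ?g x) = e * Jf \<alpha> s + M"
      using Ik Ip unfolding Jf_def G_def M_def by (subst set_integral_add(2)) auto
    have u: "(LINT x:{0..1/4}|lborel. ?h x) \<le> (LINT x:{0..1/4}|lborel. ?g x)"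
      by (rule set_integral_mono[OF Ih Ig2]) (use pw in fastforce)
    have l: "(LINT x:{0..1/4}|lborel. - ?h x) \<le> (LINT x:{0..1/4}|lborel. ?g x)"
      by (rule set_integral_mono[OF Ih' Ig2]) (use pw in fastforce)
    have "(LINT x:{0..1/4}|lborel. - ?h x) = - (LINT x:{0..1/4}|lborel. ?h x)"
      by (rule set_integral_uminus[OF Ih])
    with u l show "\<bar>G \<alpha> \<Phi> (2 - s) - \<Phi> (1/4) * Jf \<alpha> s\<bar> \<le> e * Jf \<alpha> s + M"
      unfolding eqh eqg by linarith
  qed
qed

lemma G_equiv_Jf:
  assumes meas: "set_borel_measurable lborel {0..1/4} \<Phi>"
    and B: "\<forall>x\<in>{0..1/4}. \<bar>\<Phi> x\<bar> \<le> B" and a: "\<alpha> > -1"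
    and cont: "continuous (at (1/4) within {0..1/4}) \<Phi>" and nz: "\<Phi> (1/4) \<noteq> 0"
    and lim: "filterlim (Jf \<alpha>) at_top (at_right 0)"
  shows "(\<lambda>s. G \<alpha> \<Phi> (2 - s)) \<sim>[at_right 0] (\<lambda>s. \<Phi> (1/4) * Jf \<alpha> s)"
proof (rule asymp_equivI')
  let ?R = "\<lambda>s. G \<alpha> \<Phi> (2 - s) - \<Phi> (1/4) * Jf \<alpha> s"
  have R0: "((\<lambda>s. ?R s / Jf \<alpha> s) \<longlongrightarrow> 0) (at_right 0)"
  proof (rule ratio_to_zero[OF lim])
    fix e :: real assume e: "e > 0"
    obtain M where M: "\<forall>s. 0 < s \<longrightarrow> s \<le> 2 \<longrightarrow> \<bar>?R s\<bar> \<le> e * Jf \<alpha> s + M"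
      using eps_bound[OF meas B a cont e] by blast
    have "eventually (\<lambda>s. \<bar>?R s\<bar> \<le> e * Jf \<alpha> s + M) (at_right 0)"
      using ev_s by eventually_elim (use M in auto)
    then show "\<exists>M. eventually (\<lambda>s. \<bar>?R s\<bar> \<le> e * Jf \<alpha> s + M) (at_right 0)" by blast
  qed
  have ev: "eventually (\<lambda>s. Jf \<alpha> s > 0) (at_right 0)"
    using filterlim_at_top_dense[THEN iffD1, OF lim, rule_format, of 0] by simp
  have "eventually (\<lambda>s. 1 + (?R s / Jf \<alpha> s) / \<Phi> (1/4) = G \<alpha> \<Phi> (2 - s) / (\<Phi> (1/4) * Jf \<alpha> s)) (at_right 0)"
    using ev by eventually_elim (use nz in \<open>auto simp: field_simps\<close>)
  moreover have "((\<lambda>s. 1 + (?R s / Jf \<alpha> s) / \<Phi> (1/4)) \<longlongrightarrow> 1 + 0 / \<Phi> (1/4)) (at_right 0)"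
    by (intro tendsto_intros R0 nz)
  ultimately show "((\<lambda>s. G \<alpha> \<Phi> (2 - s) / (\<Phi> (1/4) * Jf \<alpha> s)) \<longlongrightarrow> 1) (at_right 0)"
    using tendsto_cong by fastforce
qed


lemma cos_upper: "1 - cos (a::real) \<le> a\<^sup>2 / 2"
proof -
  have "cos (2 * (a/2)) = 1 - 2 * sin (a/2) ^ 2" by (rule cos_double_sin)
  then have e: "1 - cos a = 2 * (sin (a/2))\<^sup>2" by simp
  have "\<bar>sin (a/2)\<bar> \<le> \<bar>a/2\<bar>" by (rule abs_sin_x_le_abs_x)
  then have "(sin (a/2))\<^sup>2 \<le> (a/2)\<^sup>2"
    by (metis abs_ge_zero power2_abs power_mono)
  then show ?thesis unfolding e by (simp add: power2_eq_square)
qed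

lemma cos_le_pos: assumes "(a::real) > 0" shows "cos a \<le> 1 - a\<^sup>2/2 + a^4/24"
proof -
  obtain t where "cos a = (\<Sum>m<4. cos_coeff m * a ^ m) + (cos (t + 1/2 * real 4 * pi) / fact 4) * a ^ 4"
    using Maclaurin_cos_expansion2[OF assms, of 4] by auto
  moreover have "(\<Sum>m<4. cos_coeff m * a ^ m) = 1 - a\<^sup>2/2"
  proof -
    have c: "cos_coeff 0 = 1" "cos_coeff 1 = 0" "cos_coeff 2 = -1/2" "cos_coeff 3 = 0"
      by (simp_all add: cos_coeff_def)
    have "(\<Sum>m<4. cos_coeff m * a ^ m) = cos_coeff 0 * a^0 + cos_coeff 1 * a^1 + cos_coeff 2 * a^2 + cos_coeff 3 * a^3"
      by (simp add: eval_nat_numeral)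
    then show ?thesis unfolding c by simp
  qed
  moreover have "(cos (t + 1/2 * real 4 * pi) / fact 4) * a ^ 4 \<le> a^4/24"
  proof -
    have "cos (t + 1/2 * real 4 * pi) \<le> 1" by simp
    then have "cos (t + 1/2 * real 4 * pi) * a ^ 4 \<le> 1 * a ^ 4"
      by (intro mult_right_mono) auto
    then show ?thesis by (simp add: fact_numeral)
  qed
  ultimately show ?thesis by linarith
qed

lemma cos_lower: "(a::real)\<^sup>2 / 2 - a^4/24 \<le> 1 - cos a"
proof (cases "a = 0")
  case False
  have "cos \<bar>a\<bar> \<le> 1 - \<bar>a\<bar>\<^sup>2/2 + \<bar>a\<bar>^4/24" using False by (intro cos_le_pos) auto
  then show ?thesis by simp
qed simp

definition sfun :: "real \<times> real \<Rightarrow> real" where "sfun l = 2 - CC l"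
definition rho :: "real \<times> real \<Rightarrow> real" where "rho l = (fst l)\<^sup>2 + (snd l)\<^sup>2"

lemma s_upper: "sfun l \<le> rho l / 2"
  unfolding sfun_def rho_def CC_def using cos_upper[of "fst l"] cos_upper[of "snd l"] by simp

lemma s_lower: "rho l / 2 - (rho l)\<^sup>2 / 24 \<le> sfun l"
proof -
  have h: "0 \<le> (fst l * snd l) * (fst l * snd l)" by simp
  have "(fst l)^4 + (snd l)^4 \<le> (rho l)\<^sup>2"
    unfolding rho_def using h by (simp add: power2_eq_square eval_nat_numeral algebra_simps)
  then show ?thesis
    unfolding sfun_def rho_def CC_def using cos_lower[of "fst l"] cos_lower[of "snd l"]
    by (simp add: field_simps)
qed

abbreviation "FF \<equiv> at ((0::real),(0::real)) within sq_box"

lemma ev_nz: "eventually (\<lambda>l. l \<noteq> (0,0) \<and> l \<in> sq_box) FF"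
  by (simp add: eventually_at_filter)

lemma rho_pos: "l \<noteq> (0,0) \<Longrightarrow> rho l > 0"
  unfolding rho_def by (cases l) (auto simp: sum_power2_gt_zero_iff)

lemma rho_tendsto: "(rho \<longlongrightarrow> 0) FF"
proof -
  have "((\<lambda>l. (fst l)\<^sup>2 + (snd l)\<^sup>2) \<longlongrightarrow> (fst (0::real,0::real))\<^sup>2 + (snd (0::real,0::real))\<^sup>2) FF"
    by (intro tendsto_intros)
  then show ?thesis unfolding rho_def by simp
qed

lemma rho_at_right: "filterlim rho (at_right 0) FF"
proof -
  have "eventually (\<lambda>l. rho l \<in> {0<..} \<and> rho l \<noteq> 0) FF"
    using ev_nz by eventually_elim (use rho_pos in force)
  then show ?thesis unfolding filterlim_at using rho_tendsto by auto
qed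

lemma ev_rho_small: "eventually (\<lambda>l. 0 < rho l \<and> rho l < 1) FF"
proof -
  have "eventually (\<lambda>l. rho l < 1) FF"
    using rho_tendsto by (rule order_tendstoD) simp
  then show ?thesis using ev_nz by eventually_elim (auto intro: rho_pos)
qed

lemma s_pos: "0 < rho l \<Longrightarrow> rho l < 1 \<Longrightarrow> 0 < sfun l"
proof -
  assume r: "0 < rho l" "rho l < 1"
  have "0 < rho l / 2 - (rho l)\<^sup>2 / 24"
  proof -
    have "(rho l)\<^sup>2 \<le> rho l" using r by (simp add: power2_eq_square mult_le_cancel_left1)
    then show ?thesis using r by simp
  qed
  then show ?thesis using s_lower[of l] by linarith
qed

lemma s_at_right: "filterlim sfun (at_right 0) FF"
proof -
  have "((\<lambda>l. 2 - (cos (fst l) + cos (snd l))) \<longlongrightarrow> 2 - (cos (fst (0::real,0::real)) + cos (snd (0::real,0::real)))) FF"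
    by (intro tendsto_intros)
  then have "(sfun \<longlongrightarrow> 0) FF" unfolding sfun_def CC_def by simp
  moreover have "eventually (\<lambda>l. sfun l \<in> {0<..} \<and> sfun l \<noteq> 0) FF"
    using ev_rho_small
  proof eventually_elim
    case (elim l)
    then have "0 < sfun l" by (intro s_pos) auto
    then show ?case by auto
  qed
  ultimately show ?thesis unfolding filterlim_at by auto
qed

lemma s_rho_ratio: "((\<lambda>l. sfun l / (rho l / 2)) \<longlongrightarrow> 1) FF"
proof (rule tendsto_sandwich[where f = "\<lambda>l. 1 - rho l / 12" and h = "\<lambda>_. 1"])
  show "eventually (\<lambda>l. 1 - rho l / 12 \<le> sfun l / (rho l / 2)) FF"
    using ev_rho_small
  proof eventually_elim
    case (elim l)
    have "rho l / 2 - (rho l)\<^sup>2 / 24 = (1 - rho l / 12) * (rho l / 2)"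
      by (simp add: power2_eq_square field_simps)
    then have "(1 - rho l / 12) * (rho l / 2) \<le> sfun l" using s_lower[of l] by simp
    then show ?case using elim by (simp add: le_divide_eq)
  qed
  show "eventually (\<lambda>l. sfun l / (rho l / 2) \<le> 1) FF"
    using ev_rho_small by eventually_elim (use s_upper in \<open>auto simp: divide_le_eq\<close>)
  show "((\<lambda>l. 1 - rho l / 12) \<longlongrightarrow> 1) FF"
    using tendsto_diff[OF tendsto_const tendsto_divide[OF rho_tendsto tendsto_const]] by simp
  show "((\<lambda>_. 1::real) \<longlongrightarrow> 1) FF" by simp
qed

lemma s_equiv_rho: "sfun \<sim>[FF] (\<lambda>l. rho l / 2)"
  by (rule asymp_equivI') (rule s_rho_ratio)


lemma p8: "(8::real) powr y = 2 powr (3*y)"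
proof -
  have "(8::real) powr y = (2 powr 3) powr y" by (simp add: powr_numeral)
  also have "\<dots> = 2 powr (3*y)" by (rule powr_powr)
  finally show ?thesis .
qed
lemma p16: "(16::real) powr y = 2 powr (4*y)"
proof -
  have "(16::real) powr y = (2 powr 4) powr y" by (simp add: powr_numeral)
  also have "\<dots> = 2 powr (4*y)" by (rule powr_powr)
  finally show ?thesis .
qed
lemma const_id: "4 * 8 powr (-(\<alpha>+1)) / 2 powr (\<alpha>-1) = (16::real) powr (-\<alpha>)"
proof -
  have f: "(4::real) = 2 powr 2" by (simp add: powr_numeral)
  have "4 * 8 powr (-(\<alpha>+1)) / 2 powr (\<alpha>-1) = 2 powr 2 * 2 powr (3*(-(\<alpha>+1))) / 2 powr (\<alpha>-1)"
    by (simp only: p8 f)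
  also have "\<dots> = 2 powr (2 + 3*(-(\<alpha>+1)) - (\<alpha>-1))"
    by (simp only: powr_add powr_diff)
  also have "\<dots> = 2 powr (4 * (-\<alpha>))" by (simp add: algebra_simps)
  finally show ?thesis by (simp only: p16)
qed
lemma aux: "(s::real) > 0 \<Longrightarrow> Q > 0 \<Longrightarrow> (s/8)*((P/Q)*4/s\<^sup>2) = 4*(1/(8*Q))*(P/s)"
  by (simp add: field_simps power2_eq_square)
lemma J0c: "(s::real) > 0 \<Longrightarrow> (s/8) * ((s/8) powr \<alpha> * 4 / s\<^sup>2) = 4 * 8 powr (-(\<alpha>+1)) * s powr (\<alpha>-1)"
proof -
  assume s: "s > 0"
  have a: "(s/8) powr \<alpha> = s powr \<alpha> / 8 powr \<alpha>" using s by (simp add: powr_divide)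
  have b: "s powr (\<alpha> - 1) = s powr \<alpha> / s" using s by (simp add: powr_diff)
  have c1: "(8::real) powr (\<alpha>+1) = 8 powr \<alpha> * 8" by (simp add: powr_add)
  have c: "(8::real) powr (-(\<alpha>+1)) = 1 / (8 * 8 powr \<alpha>)"
    by (simp only: powr_minus c1 inverse_eq_divide mult.commute)
  show ?thesis unfolding a b c by (rule aux[OF s]) simp
qed

lemma J0_equiv_lt1:
  assumes a0: "\<alpha> > -1" and a1: "\<alpha> < 1"
  shows "J0 \<alpha> \<sim>[at_right 0] (\<lambda>s. 4 * 8 powr (-(\<alpha>+1)) * Ia \<alpha> * s powr (\<alpha>-1))"
proof (rule asymp_equivI')
  have Ip: "Ia \<alpha> > 0" by (rule Ia_pos[OF a0 a1])
  have lim2: "filterlim (\<lambda>s::real. 2/s) at_top (at_right 0)" by real_asymp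
  have K: "((\<lambda>s. KI \<alpha> (2/s)) \<longlongrightarrow> Ia \<alpha>) (at_right 0)"
    by (rule filterlim_compose[OF KI_lim[OF a0 a1] lim2])
  have "eventually (\<lambda>s. KI \<alpha> (2/s) / Ia \<alpha> = J0 \<alpha> s / (4 * 8 powr (-(\<alpha>+1)) * Ia \<alpha> * s powr (\<alpha>-1))) (at_right 0)"
    using ev_s
  proof eventually_elim
    case (elim s)
    then have s: "s > 0" by simp
    have "J0 \<alpha> s = 4 * 8 powr (-(\<alpha>+1)) * s powr (\<alpha>-1) * KI \<alpha> (2/s)"
      by (simp only: J0_eq[OF s] J0c[OF s])
    then show ?case using s Ip by simp
  qed
  moreover have "((\<lambda>s. KI \<alpha> (2/s) / Ia \<alpha>) \<longlongrightarrow> Ia \<alpha> / Ia \<alpha>) (at_right 0)"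
    by (intro tendsto_intros K) (use Ip in simp)
  ultimately show "((\<lambda>s. J0 \<alpha> s / (4 * 8 powr (-(\<alpha>+1)) * Ia \<alpha> * s powr (\<alpha>-1))) \<longlongrightarrow> 1) (at_right 0)"
    using Ip tendsto_cong by fastforce
qed

lemma J0_lim_lt1:
  assumes a0: "\<alpha> > -1" and a1: "\<alpha> < 1"
  shows "filterlim (J0 \<alpha>) at_top (at_right 0)"
proof -
  have Ip: "Ia \<alpha> > 0" by (rule Ia_pos[OF a0 a1])
  have "filterlim (\<lambda>s::real. s powr (\<alpha> - 1)) at_top (at_right 0)" using a1 by real_asymp
  then have "filterlim (\<lambda>s. 4 * 8 powr (-(\<alpha>+1)) * Ia \<alpha> * s powr (\<alpha>-1)) at_top (at_right 0)"
    by (intro filterlim_tendsto_pos_mult_at_top[OF tendsto_const]) (use Ip in auto)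
  then show ?thesis
    by (rule asymp_equiv_at_top_transfer[OF asymp_equiv_symI[OF J0_equiv_lt1[OF a0 a1]]])
qed

lemma J0_lim_1: "filterlim (J0 1) at_top (at_right 0)"
proof -
  have "filterlim (\<lambda>s::real. 1/16 * (ln (1 + 2/s) + 1/(1+2/s) - 1)) at_top (at_right 0)" by real_asymp
  moreover have "eventually (\<lambda>s. 1/16 * (ln (1 + 2/s) + 1/(1+2/s) - 1) \<le> J0 1 s) (at_right 0)"
    using ev_s by eventually_elim (simp add: J0_one)
  ultimately show ?thesis by (rule filterlim_at_top_mono)
qed

lemma J0_lim:
  assumes a0: "\<alpha> > -1" and a1: "\<alpha> \<le> 1"
  shows "filterlim (J0 \<alpha>) at_top (at_right 0)"
  using J0_lim_lt1[OF a0] J0_lim_1 a1 by (cases "\<alpha> = 1") auto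

lemma G_equiv_J0:
  assumes meas: "set_borel_measurable lborel {0..1/4} \<Phi>"
    and B: "\<forall>x\<in>{0..1/4}. \<bar>\<Phi> x\<bar> \<le> B" and a0: "\<alpha> > -1" and a1: "\<alpha> \<le> 1"
    and cont: "continuous (at (1/4) within {0..1/4}) \<Phi>" and nz: "\<Phi> (1/4) \<noteq> 0"
  shows "(\<lambda>s. G \<alpha> \<Phi> (2 - s)) \<sim>[at_right 0] (\<lambda>s. \<Phi> (1/4) * J0 \<alpha> s)"
proof -
  have L0: "filterlim (J0 \<alpha>) at_top (at_right 0)" by (rule J0_lim[OF a0 a1])
  have "eventually (\<lambda>s. J0 \<alpha> s \<le> Jf \<alpha> s) (at_right 0)"
    using ev_s by eventually_elim (use J0_le_Jf[OF a0] in auto)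
  then have Lf: "filterlim (Jf \<alpha>) at_top (at_right 0)"
    by (rule filterlim_at_top_mono[OF L0])
  have "(\<lambda>s. G \<alpha> \<Phi> (2 - s)) \<sim>[at_right 0] (\<lambda>s. \<Phi> (1/4) * Jf \<alpha> s)"
    by (rule G_equiv_Jf[OF meas B a0 cont nz Lf])
  also have "(\<lambda>s. \<Phi> (1/4) * Jf \<alpha> s) \<sim>[at_right 0] (\<lambda>s. \<Phi> (1/4) * J0 \<alpha> s)"
    by (rule asymp_equiv_mult[OF asymp_equiv_refl Jf_equiv[OF a0 L0]])
  finally show ?thesis .
qed

lemma G_comp:
  assumes meas: "set_borel_measurable lborel {0..1/4} \<Phi>"
    and B: "\<forall>x\<in>{0..1/4}. \<bar>\<Phi> x\<bar> \<le> B" and a0: "\<alpha> > -1" and a1: "\<alpha> \<le> 1"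
    and cont: "continuous (at (1/4) within {0..1/4}) \<Phi>" and nz: "\<Phi> (1/4) \<noteq> 0"
  shows "(\<lambda>l. G \<alpha> \<Phi> (CC l)) \<sim>[FF] (\<lambda>l. \<Phi> (1/4) * J0 \<alpha> (sfun l))"
  using asymp_equiv_compose'[OF G_equiv_J0[OF assms] s_at_right] by (simp add: sfun_def)


lemma aux2: "(P2::real) \<noteq> 0 \<Longrightarrow> K * (Q * (c * I * (R / P2))) = (K * (c / P2) * Q * I) * R"
  by (simp add: field_simps)

lemma asym_lt1:
  assumes meas: "set_borel_measurable lborel {0..1/4} \<Phi>"
    and B: "\<forall>x\<in>{0..1/4}. \<bar>\<Phi> x\<bar> \<le> B" and a0: "\<alpha> > -1" and a1: "\<alpha> < 1"
    and cont: "continuous (at (1/4) within {0..1/4}) \<Phi>" and nz: "\<Phi> (1/4) \<noteq> 0"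
  shows "spec_dens \<sigma>2 \<alpha> \<Phi> \<sim>[FF]
         (\<lambda>l. (\<sigma>2 / (4 * pi\<^sup>2) * 16 powr (-\<alpha>) * \<Phi> (1/4) *
                 (LINT u:{0<..}|lborel. u powr \<alpha> / (1 + u)\<^sup>2))
               * ((fst l)\<^sup>2 + (snd l)\<^sup>2) powr (\<alpha> - 1))"
proof -
  define cc where "cc = 4 * 8 powr (-(\<alpha>+1))"
  define K where "K = \<sigma>2 / (4 * pi\<^sup>2)"
  have c1: "(\<lambda>l. G \<alpha> \<Phi> (CC l)) \<sim>[FF] (\<lambda>l. \<Phi> (1/4) * J0 \<alpha> (sfun l))"
    by (rule G_comp[OF meas B a0 _ cont nz]) (use a1 in simp)
  have c2: "(\<lambda>l. J0 \<alpha> (sfun l)) \<sim>[FF] (\<lambda>l. cc * Ia \<alpha> * sfun l powr (\<alpha>-1))"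
    unfolding cc_def by (rule asymp_equiv_compose'[OF J0_equiv_lt1[OF a0 a1] s_at_right])
  have ev1: "eventually (\<lambda>l. sfun l \<ge> 0) FF"
    using ev_rho_small by eventually_elim (auto dest: s_pos)
  have ev2: "eventually (\<lambda>l. rho l / 2 \<ge> 0) FF"
    by (intro always_eventually allI) (simp add: rho_def)
  have c3: "(\<lambda>l. sfun l powr (\<alpha>-1)) \<sim>[FF] (\<lambda>l. (rho l / 2) powr (\<alpha>-1))"
    by (rule asymp_equiv_powr_real[OF s_equiv_rho ev1 ev2])
  have "(\<lambda>l. G \<alpha> \<Phi> (CC l)) \<sim>[FF] (\<lambda>l. \<Phi> (1/4) * (cc * Ia \<alpha> * (rho l / 2) powr (\<alpha>-1)))"
  proof -
    note c1
    also have "(\<lambda>l. \<Phi> (1/4) * J0 \<alpha> (sfun l)) \<sim>[FF] (\<lambda>l. \<Phi> (1/4) * (cc * Ia \<alpha> * sfun l powr (\<alpha>-1)))"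
      by (rule asymp_equiv_mult[OF asymp_equiv_refl c2])
    also have "(\<lambda>l. \<Phi> (1/4) * (cc * Ia \<alpha> * sfun l powr (\<alpha>-1))) \<sim>[FF] (\<lambda>l. \<Phi> (1/4) * (cc * Ia \<alpha> * (rho l / 2) powr (\<alpha>-1)))"
      by (rule asymp_equiv_mult[OF asymp_equiv_refl asymp_equiv_mult[OF asymp_equiv_refl c3]])
    finally show ?thesis .
  qed
  then have c4: "spec_dens \<sigma>2 \<alpha> \<Phi> \<sim>[FF] (\<lambda>l. K * (\<Phi> (1/4) * (cc * Ia \<alpha> * (rho l / 2) powr (\<alpha>-1))))"
    unfolding spec_dens_G K_def by (rule asymp_equiv_mult[OF asymp_equiv_refl])
  have Ieq: "Ia \<alpha> = (LINT u:{0<..}|lborel. u powr \<alpha> / (1 + u)\<^sup>2)"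
    unfolding Ia_def Kf_def ..
  have eq: "K * (\<Phi> (1/4) * (cc * Ia \<alpha> * (rho l / 2) powr (\<alpha>-1))) =
        (\<sigma>2 / (4 * pi\<^sup>2) * 16 powr (-\<alpha>) * \<Phi> (1/4) *
                 (LINT u:{0<..}|lborel. u powr \<alpha> / (1 + u)\<^sup>2))
               * ((fst l)\<^sup>2 + (snd l)\<^sup>2) powr (\<alpha> - 1)" for l
  proof -
    have r: "(rho l / 2) powr (\<alpha>-1) = rho l powr (\<alpha>-1) / 2 powr (\<alpha>-1)"
    proof -
      have "0 \<le> rho l" by (simp add: rho_def)
      then show ?thesis by (simp add: powr_divide)
    qed
    have "K * (\<Phi> (1/4) * (cc * Ia \<alpha> * (rho l / 2) powr (\<alpha>-1))) =
          (K * (cc / 2 powr (\<alpha>-1)) * \<Phi> (1/4) * Ia \<alpha>) * rho l powr (\<alpha>-1)"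
      unfolding r by (rule aux2) simp
    also have "cc / 2 powr (\<alpha>-1) = 16 powr (-\<alpha>)" unfolding cc_def by (rule const_id)
    finally show ?thesis unfolding K_def Ieq rho_def .
  qed
  show ?thesis using c4 unfolding eq .
qed

lemma L_equiv:
  "(\<lambda>l. ln (1 + 2 / sfun l) + 1 / (1 + 2 / sfun l) - 1) \<sim>[FF] (\<lambda>l. \<bar>ln (rho l)\<bar>)"
proof (rule asymp_equivI')
  let ?E = "\<lambda>l. ln (sfun l + 2) - ln (sfun l / rho l) + sfun l / (sfun l + 2) - 1"
  have s0: "(sfun \<longlongrightarrow> 0) FF" using s_at_right unfolding filterlim_at by blast
  have sr: "((\<lambda>l. sfun l / rho l) \<longlongrightarrow> 1/2) FF"
  proof -
    have "((\<lambda>l. sfun l / (rho l / 2) / 2) \<longlongrightarrow> 1 / 2) FF"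
      by (intro tendsto_intros s_rho_ratio) simp
    moreover have "sfun l / (rho l / 2) / 2 = sfun l / rho l" for l by simp
    ultimately show ?thesis by simp
  qed
  have E: "(?E \<longlongrightarrow> ln (0 + 2) - ln (1/2) + 0 / (0 + 2) - 1) FF"
    by (intro tendsto_intros s0 sr) auto
  have lnr: "filterlim (\<lambda>l. ln (rho l)) at_bot FF"
    by (rule filterlim_compose[OF ln_at_0 rho_at_right])
  then have "filterlim (\<lambda>l. - ln (rho l)) at_top FF"
    using filterlim_uminus_at_bot[THEN iffD1, OF lnr] by simp
  then have inv0: "((\<lambda>l. inverse (- ln (rho l))) \<longlongrightarrow> 0) FF"
    by (rule tendsto_inverse_0_at_top)
  have T: "((\<lambda>l. 1 + ?E l * inverse (- ln (rho l))) \<longlongrightarrow> 1 + (ln (0 + 2) - ln (1/2) + 0 / (0 + 2) - 1) * 0) FF"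
    by (intro tendsto_intros E inv0)
  have "eventually (\<lambda>l. 1 + ?E l * inverse (- ln (rho l)) =
      (ln (1 + 2 / sfun l) + 1 / (1 + 2 / sfun l) - 1) / \<bar>ln (rho l)\<bar>) FF"
    using ev_rho_small
  proof eventually_elim
    case (elim l)
    have s: "sfun l > 0" using elim by (intro s_pos) auto
    have r: "rho l > 0" "rho l < 1" using elim by auto
    have lr: "ln (rho l) < 0" using r by simp
    have a: "ln (1 + 2 / sfun l) = ln (sfun l + 2) - ln (sfun l)"
    proof -
      have "1 + 2 / sfun l = (sfun l + 2) / sfun l" using s by (simp add: field_simps)
      then show ?thesis using s by (simp add: ln_div)
    qed
    have b: "1 / (1 + 2 / sfun l) = sfun l / (sfun l + 2)"
      using s by (simp add: field_simps)
    have c: "ln (sfun l / rho l) = ln (sfun l) - ln (rho l)" using s r by (simp add: ln_div)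
    show ?case unfolding a b c using lr by (simp add: field_simps)
  qed
  with T show "((\<lambda>l. (ln (1 + 2 / sfun l) + 1 / (1 + 2 / sfun l) - 1) / \<bar>ln (rho l)\<bar>) \<longlongrightarrow> 1) FF"
    using tendsto_cong by fastforce
qed

lemma asym_1:
  assumes meas: "set_borel_measurable lborel {0..1/4} \<Phi>"
    and B: "\<forall>x\<in>{0..1/4}. \<bar>\<Phi> x\<bar> \<le> B"
    and cont: "continuous (at (1/4) within {0..1/4}) \<Phi>" and nz: "\<Phi> (1/4) \<noteq> 0"
  shows "spec_dens \<sigma>2 1 \<Phi> \<sim>[FF]
         (\<lambda>l. (\<sigma>2 / (4 * pi\<^sup>2) * 16 powr (-1) * \<Phi> (1/4))
               * \<bar>ln ((fst l)\<^sup>2 + (snd l)\<^sup>2)\<bar>)"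
proof -
  define K where "K = \<sigma>2 / (4 * pi\<^sup>2)"
  have c1: "(\<lambda>l. G 1 \<Phi> (CC l)) \<sim>[FF] (\<lambda>l. \<Phi> (1/4) * J0 1 (sfun l))"
    by (rule G_comp[OF meas B _ _ cont nz]) auto
  have ev: "eventually (\<lambda>l. \<Phi> (1/4) * J0 1 (sfun l) = \<Phi> (1/4) * (1/16 * (ln (1 + 2 / sfun l) + 1 / (1 + 2 / sfun l) - 1))) FF"
    using ev_rho_small
  proof eventually_elim
    case (elim l)
    have s: "sfun l > 0" using elim by (intro s_pos) auto
    show ?case by (simp add: J0_one[OF s])
  qed
  have c2: "(\<lambda>l. G 1 \<Phi> (CC l)) \<sim>[FF] (\<lambda>l. \<Phi> (1/4) * (1/16 * (ln (1 + 2 / sfun l) + 1 / (1 + 2 / sfun l) - 1)))"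
    by (rule asymp_equiv_transfer[OF c1 _ ev]) simp
  also have "(\<lambda>l. \<Phi> (1/4) * (1/16 * (ln (1 + 2 / sfun l) + 1 / (1 + 2 / sfun l) - 1))) \<sim>[FF]
             (\<lambda>l. \<Phi> (1/4) * (1/16 * \<bar>ln (rho l)\<bar>))"
    by (rule asymp_equiv_mult[OF asymp_equiv_refl asymp_equiv_mult[OF asymp_equiv_refl L_equiv]])
  finally have c: "spec_dens \<sigma>2 1 \<Phi> \<sim>[FF] (\<lambda>l. K * (\<Phi> (1/4) * (1/16 * \<bar>ln (rho l)\<bar>)))"
    unfolding spec_dens_G K_def by (rule asymp_equiv_mult[OF asymp_equiv_refl])
  have eq: "K * (\<Phi> (1/4) * (1/16 * \<bar>ln (rho l)\<bar>)) =
     (\<sigma>2 / (4 * pi\<^sup>2) * 16 powr (-1) * \<Phi> (1/4)) * \<bar>ln ((fst l)\<^sup>2 + (snd l)\<^sup>2)\<bar>" for l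
    unfolding K_def rho_def by (simp add: powr_minus_divide)
  show ?thesis using c unfolding eq .
qed

lemma divergence:
  assumes meas: "set_borel_measurable lborel {0..1/4} \<Phi>"
    and B: "\<forall>x\<in>{0..1/4}. \<bar>\<Phi> x\<bar> \<le> B" and a0: "\<alpha> > -1" and a1: "\<alpha> \<le> 1"
    and cont: "continuous (at (1/4) within {0..1/4}) \<Phi>" and nz: "\<Phi> (1/4) \<noteq> 0"
    and sigma: "\<sigma>2 > 0"
  shows "filterlim (\<lambda>l. sgn (\<Phi> (1/4)) * spec_dens \<sigma>2 \<alpha> \<Phi> l) at_top FF"
proof -
  define K where "K = \<sigma>2 / (4 * pi\<^sup>2)"
  have Kp: "K > 0" using sigma by (simp add: K_def)
  have e: "(\<lambda>l. sgn (\<Phi> (1/4)) * spec_dens \<sigma>2 \<alpha> \<Phi> l) \<sim>[FF]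
           (\<lambda>l. sgn (\<Phi> (1/4)) * (K * (\<Phi> (1/4) * J0 \<alpha> (sfun l))))"
    unfolding spec_dens_G K_def
    by (intro asymp_equiv_mult[OF asymp_equiv_refl] G_comp[OF meas B a0 a1 cont nz])
  have sg: "sgn (\<Phi> (1/4)) * (K * (\<Phi> (1/4) * y)) = (K * \<bar>\<Phi> (1/4)\<bar>) * y" for y
    by (simp add: sgn_real_def)
  have "filterlim (\<lambda>l. J0 \<alpha> (sfun l)) at_top FF"
    by (rule filterlim_compose[OF J0_lim[OF a0 a1] s_at_right])
  then have "filterlim (\<lambda>l. (K * \<bar>\<Phi> (1/4)\<bar>) * J0 \<alpha> (sfun l)) at_top FF"
    by (intro filterlim_tendsto_pos_mult_at_top[OF tendsto_const]) (use Kp nz in auto)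
  then have "filterlim (\<lambda>l. sgn (\<Phi> (1/4)) * (K * (\<Phi> (1/4) * J0 \<alpha> (sfun l)))) at_top FF"
    unfolding sg .
  then show ?thesis by (rule asymp_equiv_at_top_transfer[OF asymp_equiv_symI[OF e]])
qed


theorem lemma1:
  fixes \<alpha> \<sigma>2 :: real and \<Phi> :: "real \<Rightarrow> real"
  assumes alpha: "\<alpha> > -1"
    and meas: "set_borel_measurable lborel {0..1/4} \<Phi>"
    and bdd: "\<exists>B. \<forall>x\<in>{0..1/4}. \<bar>\<Phi> x\<bar> \<le> B"
    and cont: "continuous (at (1/4) within {0..1/4}) \<Phi>"
    and nz: "\<Phi> (1/4) \<noteq> 0"
    and sigma: "\<sigma>2 > 0"
  shows
    "(\<alpha> > 1 \<longrightarrow>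
       (\<forall>l\<in>sq_box. set_integrable lborel {0..1/4} (spec_integrand \<alpha> \<Phi> l) \<and>
          continuous (at l within sq_box) (spec_dens \<sigma>2 \<alpha> \<Phi>)))
   \<and> (\<alpha> \<le> 1 \<longrightarrow>
       (\<forall>l\<in>sq_box - {(0,0)}. set_integrable lborel {0..1/4} (spec_integrand \<alpha> \<Phi> l) \<and>
          continuous (at l within sq_box) (spec_dens \<sigma>2 \<alpha> \<Phi>))
     \<and> filterlim (\<lambda>l. sgn (\<Phi> (1/4)) * spec_dens \<sigma>2 \<alpha> \<Phi> l) at_top (at (0,0) within sq_box))
   \<and> (\<alpha> < 1 \<longrightarrow>
       spec_dens \<sigma>2 \<alpha> \<Phi> \<sim>[at (0,0) within sq_box]
         (\<lambda>l. (\<sigma>2 / (4 * pi\<^sup>2) * 16 powr (-\<alpha>) * \<Phi> (1/4) *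
                 (LINT u:{0<..}|lborel. u powr \<alpha> / (1 + u)\<^sup>2))
               * ((fst l)\<^sup>2 + (snd l)\<^sup>2) powr (\<alpha> - 1)))
   \<and> (\<alpha> = 1 \<and> (\<exists>\<beta>>0. \<exists>C>0. \<forall>x\<in>{0..1/4}. \<forall>y\<in>{0..1/4}. \<bar>\<Phi> x - \<Phi> y\<bar> \<le> C * \<bar>x - y\<bar> powr \<beta>)
      \<longrightarrow> spec_dens \<sigma>2 \<alpha> \<Phi> \<sim>[at (0,0) within sq_box]
         (\<lambda>l. (\<sigma>2 / (4 * pi\<^sup>2) * 16 powr (-1) * \<Phi> (1/4))
               * \<bar>ln ((fst l)\<^sup>2 + (snd l)\<^sup>2)\<bar>))"
proof -
  obtain B where B: "\<forall>x\<in>{0..1/4}. \<bar>\<Phi> x\<bar> \<le> B" using bdd by blast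
  have P1: "\<alpha> > 1 \<longrightarrow>
       (\<forall>l\<in>sq_box. set_integrable lborel {0..1/4} (spec_integrand \<alpha> \<Phi> l) \<and>
          continuous (at l within sq_box) (spec_dens \<sigma>2 \<alpha> \<Phi>))"
    using part_i[OF meas B] by blast
  have P2: "\<alpha> \<le> 1 \<longrightarrow>
       (\<forall>l\<in>sq_box - {(0,0)}. set_integrable lborel {0..1/4} (spec_integrand \<alpha> \<Phi> l) \<and>
          continuous (at l within sq_box) (spec_dens \<sigma>2 \<alpha> \<Phi>))
     \<and> filterlim (\<lambda>l. sgn (\<Phi> (1/4)) * spec_dens \<sigma>2 \<alpha> \<Phi> l) at_top (at (0,0) within sq_box)"
  proof
    assume a1: "\<alpha> \<le> 1"
    have "\<forall>l\<in>sq_box - {(0,0)}. set_integrable lborel {0..1/4} (spec_integrand \<alpha> \<Phi> l) \<and>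
          continuous (at l within sq_box) (spec_dens \<sigma>2 \<alpha> \<Phi>)"
    proof
      fix l assume l: "l \<in> sq_box - {(0,0)}"
      then have c: "CC l < 2" by (intro CC_lt2) auto
      show "set_integrable lborel {0..1/4} (spec_integrand \<alpha> \<Phi> l) \<and>
          continuous (at l within sq_box) (spec_dens \<sigma>2 \<alpha> \<Phi>)"
        using part_ii_cont[OF meas B alpha c] by blast
    qed
    moreover have "filterlim (\<lambda>l. sgn (\<Phi> (1/4)) * spec_dens \<sigma>2 \<alpha> \<Phi> l) at_top (at (0,0) within sq_box)"
      by (rule divergence[OF meas B alpha a1 cont nz sigma])
    ultimately show "(\<forall>l\<in>sq_box - {(0,0)}. set_integrable lborel {0..1/4} (spec_integrand \<alpha> \<Phi> l) \<and>
          continuous (at l within sq_box) (spec_dens \<sigma>2 \<alpha> \<Phi>))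
     \<and> filterlim (\<lambda>l. sgn (\<Phi> (1/4)) * spec_dens \<sigma>2 \<alpha> \<Phi> l) at_top (at (0,0) within sq_box)" by blast
  qed
  have P3: "\<alpha> < 1 \<longrightarrow>
       spec_dens \<sigma>2 \<alpha> \<Phi> \<sim>[at (0,0) within sq_box]
         (\<lambda>l. (\<sigma>2 / (4 * pi\<^sup>2) * 16 powr (-\<alpha>) * \<Phi> (1/4) *
                 (LINT u:{0<..}|lborel. u powr \<alpha> / (1 + u)\<^sup>2))
               * ((fst l)\<^sup>2 + (snd l)\<^sup>2) powr (\<alpha> - 1))"
    using asym_lt1[OF meas B alpha _ cont nz] by blast
  have P4: "\<alpha> = 1 \<and> (\<exists>\<beta>>0. \<exists>C>0. \<forall>x\<in>{0..1/4}. \<forall>y\<in>{0..1/4}. \<bar>\<Phi> x - \<Phi> y\<bar> \<le> C * \<bar>x - y\<bar> powr \<beta>)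
      \<longrightarrow> spec_dens \<sigma>2 \<alpha> \<Phi> \<sim>[at (0,0) within sq_box]
         (\<lambda>l. (\<sigma>2 / (4 * pi\<^sup>2) * 16 powr (-1) * \<Phi> (1/4))
               * \<bar>ln ((fst l)\<^sup>2 + (snd l)\<^sup>2)\<bar>)"
    using asym_1[OF meas B cont nz] by blast
  show ?thesis using P1 P2 P3 P4 by blast
qed

end
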